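(* Let $d\ge2$, let $A$ be a symmetric positive definite real $d\times d$ matrix and $G$ an arbitrary real $d\times d$ matrix. Then there exists a real symmetric $d\times d$ matrix $S$ with $SG+G^TS=2SAS$ and $\mathrm{trace}(G-AS)=0$. *)

theory Defs
  imports "HOL-Analysis.Analysis"
begin

definition sym_pos_def_mat :: "real^'n^'n \<Rightarrow> bool" where
  "sym_pos_def_mat A \<longleftrightarrow> transpose A = A \<and> (\<forall>x. x \<noteq> 0 \<longrightarrow> x \<bullet> (A *v x) > 0)"

end

theory Submission
  imports Defs
begin


lemma eig_indep:
  fixes f :: "'a::real_vector \<Rightarrow> 'a"
  assumes lin: "linear f" and fin: "finite C"
    and ev: "\<And>c. c \<in> C \<Longrightarrow> v c \<noteq> 0 \<and> f (v c) = c *\<^sub>R v c"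
  shows "(\<Sum>c\<in>C. a c *\<^sub>R v c) = 0 \<Longrightarrow> \<forall>c\<in>C. a c = 0"
  using fin ev
proof (induction C arbitrary: a rule: finite_induct)
  case empty
  then show ?case by simp
next
  case (insert c C)
  have s: "a c *\<^sub>R v c + (\<Sum>d\<in>C. a d *\<^sub>R v d) = 0"
    using insert.prems(1) insert.hyps by simp
  have "f (a c *\<^sub>R v c + (\<Sum>d\<in>C. a d *\<^sub>R v d)) = 0"
    using s lin by (simp add: linear_0)
  then have fs: "(a c * c) *\<^sub>R v c + (\<Sum>d\<in>C. (a d * d) *\<^sub>R v d) = 0"
    using insert.prems(2) lin
    by (simp add: linear_add linear_sum linear_scale o_def)
  have "c *\<^sub>R (a c *\<^sub>R v c + (\<Sum>d\<in>C. a d *\<^sub>R v d)) = 0" using s by simp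
  then have cs: "(a c * c) *\<^sub>R v c + (\<Sum>d\<in>C. (a d * c) *\<^sub>R v d) = 0"
    by (simp add: scaleR_add_right scaleR_sum_right mult.commute)
  have "(\<Sum>d\<in>C. (a d * (d - c)) *\<^sub>R v d) = (\<Sum>d\<in>C. (a d * d) *\<^sub>R v d) - (\<Sum>d\<in>C. (a d * c) *\<^sub>R v d)"
    by (simp add: algebra_simps sum_subtractf)
  also have "\<dots> = ((a c * c) *\<^sub>R v c + (\<Sum>d\<in>C. (a d * d) *\<^sub>R v d)) - ((a c * c) *\<^sub>R v c + (\<Sum>d\<in>C. (a d * c) *\<^sub>R v d))"
    by simp
  also have "\<dots> = 0" using fs cs by simp
  finally have sz: "(\<Sum>d\<in>C. (a d * (d - c)) *\<^sub>R v d) = 0" .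
  have evC: "\<And>d. d \<in> C \<Longrightarrow> v d \<noteq> 0 \<and> f (v d) = d *\<^sub>R v d"
    using insert.prems(2) by simp
  have "\<forall>d\<in>C. a d * (d - c) = 0"
    by (rule insert.IH[of "\<lambda>d. a d * (d - c)", OF sz evC])
  then have z: "\<forall>d\<in>C. a d = 0" using insert.hyps(2) by auto
  then have "a c *\<^sub>R v c = 0" using s by simp
  then have "a c = 0" using insert.prems(2) by auto
  then show ?case using z by simp
qed

lemma eig_finite:
  fixes f :: "'a::euclidean_space \<Rightarrow> 'a"
  assumes lin: "linear f"
  shows "finite {c. \<exists>v. v \<noteq> 0 \<and> f v = c *\<^sub>R v}"
proof (rule ccontr)
  let ?E = "{c. \<exists>v. v \<noteq> 0 \<and> f v = c *\<^sub>R v}"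
  assume "infinite ?E"
  then obtain C where C: "C \<subseteq> ?E" "finite C" "card C = Suc DIM('a)"
    using infinite_arbitrarily_large by blast
  define v where "v c = (SOME v. v \<noteq> 0 \<and> f v = c *\<^sub>R v)" for c
  have ev: "v c \<noteq> 0 \<and> f (v c) = c *\<^sub>R v c" if "c \<in> C" for c
  proof -
    have "\<exists>v. v \<noteq> 0 \<and> f v = c *\<^sub>R v" using C(1) that by blast
    then show ?thesis unfolding v_def by (rule someI_ex)
  qed
  have inj: "inj_on v C"
  proof (rule inj_onI)
    fix c d assume cd: "c \<in> C" "d \<in> C" "v c = v d"
    then have "c *\<^sub>R v c = d *\<^sub>R v c" using ev by metis
    then have "(c - d) *\<^sub>R v c = 0" by (simp add: algebra_simps)
    then show "c = d" using ev cd by auto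
  qed
  have "independent (v ` C)"
  proof
    assume "dependent (v ` C)"
    moreover have "finite (v ` C)" using C(2) by (rule finite_imageI)
    ultimately obtain u where u: "\<exists>w\<in>v ` C. u w \<noteq> 0" "(\<Sum>w\<in>v ` C. u w *\<^sub>R w) = 0"
      using real_vector.dependent_finite by metis
    have "(\<Sum>w\<in>v ` C. u w *\<^sub>R w) = (\<Sum>c\<in>C. u (v c) *\<^sub>R v c)"
      using sum.reindex[OF inj, of "\<lambda>w. u w *\<^sub>R w"] by (simp add: o_def)
    then have "(\<Sum>c\<in>C. u (v c) *\<^sub>R v c) = 0" using u(2) by simp
    then have "\<forall>c\<in>C. u (v c) = 0" using eig_indep[where a="\<lambda>c. u (v c)", OF lin C(2) ev] by blast
    then show False using u(1) by auto
  qed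
  then have "card (v ` C) \<le> DIM('a)" by (rule independent_bound[THEN conjunct2])
  moreover have "card (v ` C) = card C" by (rule card_image[OF inj])
  ultimately show False using C(3) by simp
qed


lemma coercive:
  fixes A :: "real^'n^'n"
  assumes "\<forall>x. x \<noteq> 0 \<longrightarrow> x \<bullet> (A *v x) > 0"
  shows "\<exists>c>0. \<forall>y. c * (norm y)\<^sup>2 \<le> y \<bullet> (A *v y)"
proof -
  have ne: "sphere (0::real^'n) 1 \<noteq> {}"
  proof -
    obtain i :: 'n where True by blast
    have "axis i (1::real) \<in> sphere 0 1" by simp
    then show ?thesis by blast
  qed
  have cont: "continuous_on (sphere 0 1) (\<lambda>x::real^'n. x \<bullet> (A *v x))"
    by (intro continuous_intros)
  obtain x0 where x0: "x0 \<in> sphere 0 1" "\<forall>y\<in>sphere 0 1. x0 \<bullet> (A *v x0) \<le> y \<bullet> (A *v y)"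
    using continuous_attains_inf[OF compact_sphere ne cont] by blast
  define c where "c = x0 \<bullet> (A *v x0)"
  have "x0 \<noteq> 0" using x0(1) by auto
  then have cpos: "c > 0" using assms unfolding c_def by blast
  show ?thesis
  proof (intro exI[of _ c] conjI allI cpos)
    fix y :: "real^'n"
    show "c * (norm y)\<^sup>2 \<le> y \<bullet> (A *v y)"
    proof (cases "y = 0")
      case True then show ?thesis by simp
    next
      case False
      define z where "z = (1 / norm y) *\<^sub>R y"
      have "z \<in> sphere 0 1" using False unfolding z_def by simp
      then have "c \<le> z \<bullet> (A *v z)" using x0 unfolding c_def by blast
      also have "z \<bullet> (A *v z) = (1/norm y)^2 * (y \<bullet> (A *v y))"
        unfolding z_def by (simp add: matrix_vector_mult_scaleR power2_eq_square)
      finally have "c \<le> (y \<bullet> (A *v y)) / (norm y)^2" by (simp add: field_simps)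
      then show ?thesis using False by (simp add: field_simps)
    qed
  qed
qed



lemma mat_rdistrib: "((B::real^'n^'n) + C) ** A = B ** A + C ** A"
  by (simp add: matrix_matrix_mult_def vec_eq_iff sum.distrib distrib_right)

lemma transpose_add': "transpose ((A::real^'n^'n) + B) = transpose A + transpose B"
  by (simp add: transpose_def vec_eq_iff)

lemma trace_transpose': "trace (transpose (A::real^'n^'n)) = trace A"
  by (simp add: trace_def transpose_def)

lemma scaleR_mv: "((c::real) *\<^sub>R (A::real^'n^'n)) *v x = c *\<^sub>R (A *v x)"
  by (simp add: matrix_vector_mult_def vec_eq_iff sum_distrib_left mult.assoc)

lemma dotT: "x \<bullet> (B *v y) = (transpose B *v x) \<bullet> (y::real^'n)"
  by (simp add: dot_lmul_matrix)

lemma trace_scaleR': "trace ((c::real) *\<^sub>R (A::real^'n^'n)) = c * trace A"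
  by (simp add: trace_def sum_distrib_left)

lemma lyap_solution:
  fixes A M :: "real^'n^'n"
  assumes symA: "transpose A = A" and posA: "\<forall>x. x \<noteq> 0 \<longrightarrow> x \<bullet> (A *v x) > 0"
    and injL: "inj (\<lambda>P. M ** P + P ** transpose M)"
  shows "\<exists>S. transpose S = S \<and> S ** M + transpose M ** S = 2 *\<^sub>R (S ** A ** S)
             \<and> trace (M - A ** S) = 0"
proof -
  define L where "L P = M ** P + P ** transpose M" for P :: "real^'n^'n"
  have lin: "linear L"
    by (rule linearI) (simp_all add: L_def matrix_add_ldistrib mat_rdistrib matrix_scalar_ac
        scalar_matrix_assoc[symmetric] algebra_simps)
  have "inj L" using injL unfolding L_def .
  then have "surj L" using linear_injective_imp_surjective[OF lin] by simp
  then obtain P0 where P0: "L P0 = 2 *\<^sub>R A" by (metis surjE)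
  have LT: "L (transpose P0) = 2 *\<^sub>R A"
  proof -
    have "L (transpose P0) = transpose (L P0)"
      unfolding L_def by (simp add: transpose_add' matrix_transpose_mul add.commute)
    then show ?thesis using P0 symA by (simp add: transpose_scalar)
  qed
  define P where "P = (1/2) *\<^sub>R (P0 + transpose P0)"
  have LP: "L P = 2 *\<^sub>R A"
  proof -
    have "L P = (1/2) *\<^sub>R (L P0 + L (transpose P0))"
      unfolding P_def using lin by (simp add: linear_add linear_scale)
    also have "\<dots> = 2 *\<^sub>R A" using P0 LT by (simp add: scaleR_add_right[symmetric])
    finally show ?thesis .
  qed
  have symP: "transpose P = P"
    unfolding P_def by (simp add: transpose_scalar transpose_add' add.commute)
  have "inj ((*v) P)"
  proof -
    have "x = 0" if "P *v x = 0" for x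
    proof -
      have "(L P) *v x = M *v (P *v x) + P *v (transpose M *v x)"
        unfolding L_def by (simp add: matrix_vector_mult_add_rdistrib matrix_vector_mul_assoc[symmetric] del: transpose_matrix_vector)
      then have "x \<bullet> ((L P) *v x) = x \<bullet> (P *v (transpose M *v x))"
        using that by (simp add: inner_add_right)
      also have "\<dots> = (transpose P *v x) \<bullet> (transpose M *v x)" by (rule dotT)
      also have "\<dots> = 0" using symP that by simp
      finally have "x \<bullet> ((2 *\<^sub>R A) *v x) = 0" using LP by simp
      then have "x \<bullet> (A *v x) = 0" by (simp add: scaleR_mv)
      then show ?thesis using posA by force
    qed
    then show ?thesis using linear_injective_0[OF matrix_vector_mul_linear] by blast
  qed
  then obtain S where SP: "S ** P = mat 1" using matrix_left_invertible_injective by blast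
  then have PS: "P ** S = mat 1" using matrix_left_right_inverse by blast
  have "transpose S ** P = mat 1"
    using PS symP by (metis matrix_transpose_mul transpose_mat)
  then have symS: "transpose S = S"
    by (metis PS matrix_mul_assoc matrix_mul_lid matrix_mul_rid)
  have eq: "S ** M + transpose M ** S = 2 *\<^sub>R (S ** A ** S)"
  proof -
    have "S ** (L P) ** S = S ** M ** (P ** S) + (S ** P) ** transpose M ** S"
      unfolding L_def by (simp add: matrix_add_ldistrib mat_rdistrib matrix_mul_assoc)
    also have "\<dots> = S ** M + transpose M ** S" using SP PS by simp
    finally show ?thesis using LP
      by (simp add: matrix_scalar_ac scalar_matrix_assoc[symmetric])
  qed
  have tr: "trace (A ** S) = trace M"
  proof -
    have "trace ((L P) ** S) = trace (M ** (P ** S)) + trace (P ** (transpose M ** S))"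
      unfolding L_def by (simp add: mat_rdistrib trace_add matrix_mul_assoc)
    also have "trace (P ** (transpose M ** S)) = trace ((transpose M ** S) ** P)"
      by (rule trace_mul_sym)
    also have "\<dots> = trace M"
      using SP by (simp add: matrix_mul_assoc[symmetric] trace_transpose')
    finally have "trace ((L P) ** S) = 2 * trace M" using PS by simp
    then show ?thesis using LP by (simp add: scalar_matrix_assoc[symmetric] trace_scaleR')
  qed
  show ?thesis using symS eq tr by (auto simp: trace_sub)
qed

lemma sol_bound:
  fixes A M S :: "real^'n^'n"
  assumes c: "c > 0" "\<forall>y. c * (norm y)\<^sup>2 \<le> y \<bullet> (A *v y)"
    and symS: "transpose S = S" and eq: "S ** M + transpose M ** S = 2 *\<^sub>R (S ** A ** S)"
    and B: "\<forall>x. norm (M *v x) \<le> B * norm x" and B0: "B \<ge> 0"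
  shows "norm S \<le> real CARD('n) * real CARD('n) * (B / c)"
proof -
  have key: "norm (S *v x) \<le> (B/c) * norm x" for x
  proof -
    define y where "y = S *v x"
    have "x \<bullet> ((S ** M + transpose M ** S) *v x) = x \<bullet> (S *v (M *v x)) + x \<bullet> (transpose M *v (S *v x))"
      by (simp add: matrix_vector_mult_add_rdistrib matrix_vector_mul_assoc[symmetric] inner_add_right
           del: transpose_matrix_vector)
    also have "x \<bullet> (S *v (M *v x)) = y \<bullet> (M *v x)"
      unfolding y_def using dotT[of x S "M *v x"] symS by simp
    also have "x \<bullet> (transpose M *v (S *v x)) = (M *v x) \<bullet> y"
      unfolding y_def using dotT[of x "transpose M" "S *v x"] by simp
    finally have l: "x \<bullet> ((S ** M + transpose M ** S) *v x) = 2 * (y \<bullet> (M *v x))"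
      by (simp add: inner_commute)
    have "x \<bullet> ((2 *\<^sub>R (S ** A ** S)) *v x) = 2 * (x \<bullet> (S *v (A *v y)))"
      unfolding y_def by (simp add: scaleR_mv matrix_vector_mul_assoc[symmetric] del: transpose_matrix_vector)
    also have "x \<bullet> (S *v (A *v y)) = y \<bullet> (A *v y)"
      unfolding y_def using dotT[of x S] symS by simp
    finally have "y \<bullet> (A *v y) = y \<bullet> (M *v x)" using l eq by simp
    also have "\<dots> \<le> norm y * norm (M *v x)" by (rule norm_cauchy_schwarz)
    also have "\<dots> \<le> norm y * (B * norm x)" using B by (simp add: mult_left_mono)
    finally have "c * (norm y)\<^sup>2 \<le> norm y * (B * norm x)" using c(2) by (meson order_trans)
    then have "c * norm y \<le> B * norm x \<or> norm y = 0"
      by (auto simp: power2_eq_square)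
    then show ?thesis unfolding y_def using c(1) B0 by (auto simp: field_simps)
  qed
  have on: "onorm ((*v) S) \<le> B / c" by (rule onorm_le) (use key in simp)
  have comp: "\<bar>S $ i $ j\<bar> \<le> B / c" for i j
    using matrix_component_le_onorm[of S i j] on by linarith
  have rows: "norm (S $ i) \<le> real CARD('n) * (B / c)" for i
  proof -
    have "norm (S $ i) \<le> (\<Sum>j\<in>UNIV. \<bar>S $ i $ j\<bar>)" by (rule norm_le_l1_cart)
    also have "\<dots> \<le> of_nat (card (UNIV::'n set)) * (B / c)"
      by (rule sum_bounded_above) (rule comp)
    finally show ?thesis by simp
  qed
  have "norm S \<le> (\<Sum>i\<in>UNIV. norm (S $ i))"
    unfolding norm_vec_def by (rule L2_set_le_sum) simp
  also have "\<dots> \<le> of_nat (card (UNIV::'n set)) * (real CARD('n) * (B / c))"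
    by (rule sum_bounded_above) (rule rows)
  finally show ?thesis by (simp add: mult.assoc)
qed

lemma tendsto_mmult:
  fixes f g :: "'b \<Rightarrow> real^'n^'n"
  assumes "(f \<longlongrightarrow> a) F" "(g \<longlongrightarrow> b) F"
  shows "((\<lambda>x. f x ** g x) \<longlongrightarrow> a ** b) F"
  by (rule vec_tendstoI, rule vec_tendstoI, simp add: matrix_matrix_mult_def,
      intro tendsto_intros assms)

lemma tendsto_transpose:
  fixes f :: "'b \<Rightarrow> real^'n^'n"
  assumes "(f \<longlongrightarrow> a) F"
  shows "((\<lambda>x. transpose (f x)) \<longlongrightarrow> transpose a) F"
  by (rule vec_tendstoI, rule vec_tendstoI, simp add: transpose_def,
      intro tendsto_intros assms)

lemma tendsto_trace:
  fixes f :: "'b \<Rightarrow> real^'n^'n"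
  assumes "(f \<longlongrightarrow> a) F"
  shows "((\<lambda>x. trace (f x)) \<longlongrightarrow> trace a) F"
  unfolding trace_def by (intro tendsto_intros assms)

theorem theorem4p9:
  fixes A G :: "real^'n^'n"
  assumes "CARD('n) \<ge> 2"
    and "sym_pos_def_mat A"
  shows "\<exists>S :: real^'n^'n. transpose S = S \<and>
           S ** G + transpose G ** S = 2 *\<^sub>R (S ** A ** S) \<and>
           trace (G - A ** S) = 0"
proof -
  have symA: "transpose A = A" and posA: "\<forall>x. x \<noteq> 0 \<longrightarrow> x \<bullet> (A *v x) > 0"
    using assms(2) unfolding sym_pos_def_mat_def by auto
  obtain c where c: "c > 0" "\<forall>y. c * (norm y)\<^sup>2 \<le> y \<bullet> (A *v y)"
    using coercive[OF posA] by blast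
  define L0 where "L0 P = G ** P + P ** transpose G" for P :: "real^'n^'n"
  have lin: "linear L0"
    by (rule linearI) (simp_all add: L0_def matrix_add_ldistrib mat_rdistrib matrix_scalar_ac
        scalar_matrix_assoc[symmetric] algebra_simps)
  define E where "E = {c. \<exists>v. v \<noteq> 0 \<and> L0 v = c *\<^sub>R v}"
  have finE: "finite E" unfolding E_def by (rule eig_finite[OF lin])
  define Bad where "Bad = (\<lambda>c. - c / 2) ` E"
  have finB: "finite Bad" unfolding Bad_def using finE by simp
  define MM where "MM e = G + e *\<^sub>R (mat 1 :: real^'n^'n)" for e
  have MMeq: "MM e ** P + P ** transpose (MM e) = L0 P + (2 * e) *\<^sub>R P" for e P
  proof -
    have "(G + e *\<^sub>R mat 1) ** P = G ** P + e *\<^sub>R P"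
      by (simp add: mat_rdistrib scalar_matrix_assoc[symmetric])
    moreover have "P ** transpose (G + e *\<^sub>R mat 1) = P ** transpose G + e *\<^sub>R P"
      by (simp add: transpose_add' transpose_scalar matrix_add_ldistrib matrix_scalar_ac scalar_matrix_assoc[symmetric])
    moreover have "(2*e) *\<^sub>R P = e *\<^sub>R P + e *\<^sub>R P" by (metis mult_2 scaleR_add_left)
    ultimately show ?thesis unfolding MM_def L0_def by (simp only: add_ac)
  qed
  have good: "\<exists>e. 0 < e \<and> e < inverse (real (Suc k)) \<and>
      inj (\<lambda>P. MM e ** P + P ** transpose (MM e))" for k
  proof -
    have "infinite {0<..<inverse (real (Suc k))}" by (rule infinite_Ioo) simp
    then have "\<not> {0<..<inverse (real (Suc k))} \<subseteq> Bad" using finB finite_subset by blast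
    then obtain e where e0: "e \<in> {0<..<inverse (real (Suc k))}" "e \<notin> Bad" by blast
    have e: "0 < e" "e < inverse (real (Suc k))" "e \<notin> Bad"
      using e0 by (simp_all del: of_nat_Suc)
    have "inj (\<lambda>P. MM e ** P + P ** transpose (MM e))"
    proof -
      have linE: "linear (\<lambda>P. MM e ** P + P ** transpose (MM e))"
        by (rule linearI) (simp_all add: MMeq linear_add[OF lin] linear_scale[OF lin] scaleR_add_right
             add_ac mult.commute)
      have "P = 0" if "MM e ** P + P ** transpose (MM e) = 0" for P
      proof (rule ccontr)
        assume "P \<noteq> 0"
        have "L0 P = (- 2 * e) *\<^sub>R P" using that unfolding MMeq by (simp add: algebra_simps eq_neg_iff_add_eq_0)
        then have "- 2 * e \<in> E" unfolding E_def using \<open>P \<noteq> 0\<close> by blast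
        then have "- (- 2 * e) / 2 \<in> Bad" unfolding Bad_def by blast
        then show False using e(3) by simp
      qed
      then show ?thesis using linear_injective_0[OF linE] by blast
    qed
    then show ?thesis using e by blast
  qed
  then have "\<forall>k. \<exists>e. 0 < e \<and> e < inverse (real (Suc k)) \<and>
      inj (\<lambda>P. MM e ** P + P ** transpose (MM e))" by blast
  from choice[OF this] obtain e where eall: "\<forall>k. 0 < e k \<and> e k < inverse (real (Suc k)) \<and>
      inj (\<lambda>P. MM (e k) ** P + P ** transpose (MM (e k)))" by blast
  have e: "\<And>k. 0 < e k" "\<And>k. e k < inverse (real (Suc k))"
    "\<And>k. inj (\<lambda>P. MM (e k) ** P + P ** transpose (MM (e k)))"
    using eall by blast+
  have "\<exists>S. transpose S = S \<and> S ** MM (e k) + transpose (MM (e k)) ** S = 2 *\<^sub>R (S ** A ** S)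
             \<and> trace (MM (e k) - A ** S) = 0" for k
    by (rule lyap_solution[OF symA posA e(3)])
  then have "\<forall>k. \<exists>S. transpose S = S \<and> S ** MM (e k) + transpose (MM (e k)) ** S = 2 *\<^sub>R (S ** A ** S)
             \<and> trace (MM (e k) - A ** S) = 0" by blast
  from choice[OF this] obtain S where Sall: "\<forall>k. transpose (S k) = S k \<and>
     S k ** MM (e k) + transpose (MM (e k)) ** S k = 2 *\<^sub>R (S k ** A ** S k) \<and>
     trace (MM (e k) - A ** S k) = 0" by blast
  have S: "\<And>k. transpose (S k) = S k"
    "\<And>k. S k ** MM (e k) + transpose (MM (e k)) ** S k = 2 *\<^sub>R (S k ** A ** S k)"
    "\<And>k. trace (MM (e k) - A ** S k) = 0"
    using Sall by blast+
  define B where "B = onorm ((*v) G) + 1"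
  have "0 \<le> onorm ((*v) G)" by (rule onorm_pos_le[OF matrix_vector_mul_bounded_linear])
  then have B0: "B \<ge> 0" unfolding B_def by simp
  have ek1: "e k \<le> 1" for k
  proof -
    have "inverse (real (Suc k)) \<le> 1" by (simp add: inverse_le_1_iff)
    then show ?thesis using e(2)[of k] by linarith
  qed
  have MB: "\<forall>x. norm (MM (e k) *v x) \<le> B * norm x" for k
  proof
    fix x
    have "norm (MM (e k) *v x) = norm (G *v x + e k *\<^sub>R x)"
      unfolding MM_def by (simp add: matrix_vector_mult_add_rdistrib scaleR_mv)
    also have "\<dots> \<le> norm (G *v x) + norm (e k *\<^sub>R x)" by (rule norm_triangle_ineq)
    also have "norm (e k *\<^sub>R x) \<le> norm x" using e(1)[of k] ek1[of k]
      by (simp add: mult_left_le_one_le)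
    also have "norm (G *v x) \<le> onorm ((*v) G) * norm x"
      by (rule onorm[OF matrix_vector_mul_bounded_linear])
    finally show "norm (MM (e k) *v x) \<le> B * norm x" unfolding B_def by (simp add: algebra_simps)
  qed
  define R where "R = real CARD('n) * real CARD('n) * (B / c)"
  have Sb: "S k \<in> cball 0 R" for k
    using sol_bound[OF c S(1) S(2) MB B0, of k] unfolding R_def by simp
  have sc: "seq_compact (cball (0::real^'n^'n) R)" by (rule compact_imp_seq_compact[OF compact_cball])
  have "\<exists>l\<in>cball 0 R. \<exists>r. strict_mono r \<and> (S \<circ> r) \<longlonglongrightarrow> l"
    using sc Sb unfolding seq_compact_def by blast
  then obtain S0 r where r: "strict_mono r" "(S \<circ> r) \<longlonglongrightarrow> S0" by blast
  have e0: "e \<longlonglongrightarrow> 0"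
  proof (rule tendsto_sandwich[OF _ _ tendsto_const LIMSEQ_inverse_real_of_nat])
    show "\<forall>\<^sub>F k in sequentially. 0 \<le> e k" using e(1) by (simp add: less_imp_le)
    show "\<forall>\<^sub>F k in sequentially. e k \<le> inverse (real (Suc k))" using e(2) by (simp add: less_imp_le)
  qed
  define T where "T k = S (r k)" for k
  define d where "d k = e (r k)" for k
  have T: "T \<longlonglongrightarrow> S0" using r(2) unfolding T_def o_def .
  have d: "d \<longlonglongrightarrow> 0" using LIMSEQ_subseq_LIMSEQ[OF e0 r(1)] unfolding d_def o_def .
  have MM: "(\<lambda>k. MM (d k)) \<longlonglongrightarrow> G"
  proof -
    have "(\<lambda>k. G + d k *\<^sub>R (mat 1 :: real^'n^'n)) \<longlonglongrightarrow> G + 0 *\<^sub>R mat 1"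
      by (intro tendsto_intros d)
    then show ?thesis unfolding MM_def by simp
  qed
  have symS0: "transpose S0 = S0"
  proof -
    have "(\<lambda>k. transpose (T k)) \<longlonglongrightarrow> transpose S0" by (rule tendsto_transpose[OF T])
    then have "T \<longlonglongrightarrow> transpose S0" using S(1) unfolding T_def by simp
    then show ?thesis using T LIMSEQ_unique by blast
  qed
  have eq0: "S0 ** G + transpose G ** S0 = 2 *\<^sub>R (S0 ** A ** S0)"
  proof -
    have l1: "(\<lambda>k. T k ** MM (d k) + transpose (MM (d k)) ** T k) \<longlonglongrightarrow> S0 ** G + transpose G ** S0"
      by (intro tendsto_add tendsto_mmult tendsto_transpose T MM)
    have l2: "(\<lambda>k. 2 *\<^sub>R (T k ** A ** T k)) \<longlonglongrightarrow> 2 *\<^sub>R (S0 ** A ** S0)"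
      by (intro tendsto_scaleR tendsto_const tendsto_mmult T)
    have "(\<lambda>k. T k ** MM (d k) + transpose (MM (d k)) ** T k) = (\<lambda>k. 2 *\<^sub>R (T k ** A ** T k))"
      using S(2) unfolding T_def d_def by simp
    then show ?thesis using LIMSEQ_unique[OF l1] l2 by simp
  qed
  have tr0: "trace (G - A ** S0) = 0"
  proof -
    have l: "(\<lambda>k. trace (MM (d k) - A ** T k)) \<longlonglongrightarrow> trace (G - A ** S0)"
      by (intro tendsto_trace tendsto_diff tendsto_mmult tendsto_const T MM)
    have "(\<lambda>k. trace (MM (d k) - A ** T k)) = (\<lambda>k. 0)"
      using S(3) unfolding T_def d_def by simp
    then show ?thesis using LIMSEQ_unique[OF l] by simp
  qed
  show ?thesis using symS0 eq0 tr0 by blast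
qed

end
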